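(* For every weak composition $\alpha$, the underlying diagram (ignoring labels) of $\mathsf{snow}(D(\alpha))$ equals $\bigcup_{(r,c)\in\mathsf{dark}(\alpha)}\big(([r]\times\{c\})\cup(\{r\}\times[c])\big)$.
   Context: A weak composition is an infinite sequence of nonnegative integers with finitely many positive entries. $D(\alpha)=\{(r,c):1\le c\le\alpha_r\}$, $(r,c)$ being the cell in row $r$ (row 1 on top), column $c$; $[m]=\{1,\dots,m\}$. For a diagram $D$, $\mathsf{snow}(D)$ is built by iterating through rows from bottom to top: in row $r$ take the rightmost cell $(r,c)\in D$ such that column $c$ contains no dark cloud yet; if it exists label it a dark cloud and add snowflake cells at $(r',c)$ for all $r'<r$ with $(r',c)\notin D$. $\mathsf{dark}(\alpha)$ is the set of dark-cloud cells of $\mathsf{snow}(D(\alpha))$. *)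

theory Defs
  imports Main
begin

text \<open>A weak composition is a sequence of naturals indexed by rows 1,2,...
  with finitely many positive entries. We use a function nat => nat; the
  value at index 0 is ignored (rows start at 1).\<close>

definition weak_composition :: "(nat \<Rightarrow> nat) \<Rightarrow> bool" where
  "weak_composition \<alpha> \<longleftrightarrow> finite {r. 0 < \<alpha> r}"

text \<open>Cells are pairs (row, column); row 1 is on top.\<close>
definition diagram :: "(nat \<Rightarrow> nat) \<Rightarrow> (nat \<times> nat) set" where
  "diagram \<alpha> = {(r, c). 1 \<le> r \<and> 1 \<le> c \<and> c \<le> \<alpha> r}"

text \<open>Dark-cloud selection: process rows r, r-1, ..., 1 (bottom to top),
  given the set K of dark clouds found so far. In row r take the rightmost
  cell of D whose column has no dark cloud yet.\<close>
fun dark_aux :: "(nat \<times> nat) set \<Rightarrow> nat \<Rightarrow> (nat \<times> nat) set \<Rightarrow> (nat \<times> nat) set" where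
  "dark_aux D 0 K = K"
| "dark_aux D (Suc r) K =
     (let C = {c. (Suc r, c) \<in> D \<and> c \<notin> snd ` K}
      in if C = {} then dark_aux D r K else dark_aux D r (insert (Suc r, Max C) K))"

definition bottom_row :: "(nat \<times> nat) set \<Rightarrow> nat" where
  "bottom_row D = Max (insert 0 (fst ` D))"

definition snow_dark :: "(nat \<times> nat) set \<Rightarrow> (nat \<times> nat) set" where
  "snow_dark D = dark_aux D (bottom_row D) {}"

definition snow_diagram :: "(nat \<times> nat) set \<Rightarrow> (nat \<times> nat) set" where
  "snow_diagram D = D \<union> {(r', c). \<exists>r. (r, c) \<in> snow_dark D \<and> 1 \<le> r' \<and> r' < r \<and> (r', c) \<notin> D}"

definition dark :: "(nat \<Rightarrow> nat) \<Rightarrow> (nat \<times> nat) set" where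
  "dark \<alpha> = snow_dark (diagram \<alpha>)"

end

theory Submission
  imports Defs
begin

lemma dark_aux_mono: "K \<subseteq> dark_aux D r K"
proof (induction r arbitrary: K)
  case 0 then show ?case by simp
next
  case (Suc r)
  have "K \<subseteq> dark_aux D r (insert a K)" for a
    using Suc.IH[of "insert a K"] by blast
  then show ?case using Suc.IH[of K] by (simp add: Let_def)
qed

lemma dark_aux_Suc:
  assumes "C = {c. (Suc r, c) \<in> D \<and> c \<notin> snd ` K}"
  shows "dark_aux D (Suc r) K = (if C = {} then dark_aux D r K
     else dark_aux D r (insert (Suc r, Max C) K))"
  unfolding assms dark_aux.simps Let_def by (rule refl)

lemma dark_aux_sub:
  assumes "finite D"
  shows "dark_aux D r K \<subseteq> K \<union> {x. x \<in> D \<and> 1 \<le> fst x \<and> fst x \<le> r}"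
  using assms
proof (induction r arbitrary: K)
  case 0 then show ?case by simp
next
  case (Suc r)
  define C where "C = {c. (Suc r, c) \<in> D \<and> c \<notin> snd ` K}"
  have fC: "finite C"
  proof -
    have "C \<subseteq> snd ` D"
    proof
      fix c assume "c \<in> C"
      then have "(Suc r, c) \<in> D" unfolding C_def by blast
      then show "c \<in> snd ` D" by (rule image_eqI[rotated]) simp
    qed
    then show ?thesis using Suc.prems finite_subset by blast
  qed
  show ?case
  proof (cases "C = {}")
    case True
    then have e: "dark_aux D (Suc r) K = dark_aux D r K" using dark_aux_Suc[OF C_def] by simp
    show ?thesis unfolding e using Suc.IH[OF Suc.prems, of K] by auto
  next
    case False
    have "Max C \<in> C" using fC False by simp
    then have "(Suc r, Max C) \<in> D" unfolding C_def by simp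
    moreover have e: "dark_aux D (Suc r) K = dark_aux D r (insert (Suc r, Max C) K)"
      using False dark_aux_Suc[OF C_def] by simp
    ultimately show ?thesis unfolding e using Suc.IH[OF Suc.prems, of "insert (Suc r, Max C) K"]
      by auto
  qed
qed

lemma dark_aux_cover:
  assumes "finite D" "\<forall>x\<in>K. fst x > r" "(r0, c) \<in> D" "1 \<le> r0" "r0 \<le> r"
  shows "\<exists>y\<in>dark_aux D r K. (fst y = r0 \<and> c \<le> snd y) \<or> (snd y = c \<and> r0 \<le> fst y)"
  using assms
proof (induction r arbitrary: K)
  case 0 then show ?case by simp
next
  case (Suc r)
  define C where "C = {c. (Suc r, c) \<in> D \<and> c \<notin> snd ` K}"
  have fC: "finite C"
  proof -
    have "C \<subseteq> snd ` D"
    proof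
      fix c assume "c \<in> C"
      then have "(Suc r, c) \<in> D" unfolding C_def by blast
      then show "c \<in> snd ` D" by (rule image_eqI[rotated]) simp
    qed
    then show ?thesis using Suc.prems(1) finite_subset finite_imageI by blast
  qed
  show ?case
  proof (cases "r0 = Suc r")
    case True
    show ?thesis
    proof (cases "c \<in> C")
      case cC: True
      then have ne: "C \<noteq> {}" by blast
      have le: "c \<le> Max C" using fC cC by simp
      have e: "dark_aux D (Suc r) K = dark_aux D r (insert (Suc r, Max C) K)"
        using ne dark_aux_Suc[OF C_def] by simp
      have "(Suc r, Max C) \<in> dark_aux D (Suc r) K"
        unfolding e using dark_aux_mono[of "insert (Suc r, Max C) K" D r] by blast
      then show ?thesis using True le by (intro bexI[of _ "(Suc r, Max C)"]) simp_all
    next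
      case False
      then have "c \<in> snd ` K" using Suc.prems(3) True unfolding C_def by blast
      then obtain y where y: "y \<in> K" "c = snd y" by blast
      then have "fst y > Suc r" using Suc.prems(2) by blast
      moreover have "y \<in> dark_aux D (Suc r) K"
        using y dark_aux_mono[of K D "Suc r"] by blast
      ultimately show ?thesis using True y(2) by (intro bexI[of _ y]) simp_all
    qed
  next
    case False
    then have r0r: "r0 \<le> r" using Suc.prems(5) by simp
    show ?thesis
    proof (cases "C = {}")
      case True
      have "\<forall>x\<in>K. fst x > r" using Suc.prems(2) Suc_lessD by blast
      then have "\<exists>y\<in>dark_aux D r K. (fst y = r0 \<and> c \<le> snd y) \<or> (snd y = c \<and> r0 \<le> fst y)"
        using Suc.IH[OF Suc.prems(1) _ Suc.prems(3,4) r0r] by blast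
      moreover have e: "dark_aux D (Suc r) K = dark_aux D r K" using True dark_aux_Suc[OF C_def] by simp
      ultimately show ?thesis by simp
    next
      case ne: False
      have "\<forall>x\<in>insert (Suc r, Max C) K. fst x > r" using Suc.prems(2) Suc_lessD by auto
      then have "\<exists>y\<in>dark_aux D r (insert (Suc r, Max C) K). (fst y = r0 \<and> c \<le> snd y) \<or> (snd y = c \<and> r0 \<le> fst y)"
        using Suc.IH[OF Suc.prems(1) _ Suc.prems(3,4) r0r] by blast
      moreover have e: "dark_aux D (Suc r) K = dark_aux D r (insert (Suc r, Max C) K)"
        using ne dark_aux_Suc[OF C_def] by simp
      ultimately show ?thesis by simp
    qed
  qed
qed

theorem lemma4p14:
  fixes \<alpha> :: "nat \<Rightarrow> nat"
  assumes "weak_composition \<alpha>"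
  shows "snow_diagram (diagram \<alpha>) =
    (\<Union>(r, c)\<in>dark \<alpha>. ({1..r} \<times> {c}) \<union> ({r} \<times> {1..c}))"
proof -
  define D where "D = diagram \<alpha>"
  have fin: "finite D"
  proof -
    have "D \<subseteq> (SIGMA r:{r. 0 < \<alpha> r}. {1..\<alpha> r})" unfolding D_def diagram_def by auto
    moreover have "finite (SIGMA r:{r. 0 < \<alpha> r}. {1..\<alpha> r})"
      using assms unfolding weak_composition_def by auto
    ultimately show ?thesis using finite_subset by blast
  qed
  have dsub: "snow_dark D \<subseteq> D \<inter> {x. 1 \<le> fst x}"
    using dark_aux_sub[OF fin, where r="bottom_row D" and K="{}"] unfolding snow_dark_def by auto
  have left: "(r, c') \<in> D" if "(r, c) \<in> D" "1 \<le> c'" "c' \<le> c" for r c c'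
    using that unfolding D_def diagram_def by auto
  have cover: "\<exists>y\<in>snow_dark D. (fst y = r0 \<and> c \<le> snd y) \<or> (snd y = c \<and> r0 \<le> fst y)"
    if "(r0, c) \<in> D" for r0 c
  proof -
    have r1: "1 \<le> r0" using that unfolding D_def diagram_def by auto
    have "r0 \<in> fst ` D" using that by force
    then have "r0 \<le> bottom_row D" unfolding bottom_row_def using fin by simp
    then show ?thesis using dark_aux_cover[OF fin _ that r1, where r="bottom_row D" and K="{}"]
      unfolding snow_dark_def by simp
  qed
  have c1: "(r0, c) \<in> D \<Longrightarrow> 1 \<le> c" for r0 c unfolding D_def diagram_def by auto
  show ?thesis
    unfolding D_def[symmetric] dark_def
  proof
    show "snow_diagram D \<subseteq> (\<Union>(r, c)\<in>snow_dark D. ({1..r} \<times> {c}) \<union> ({r} \<times> {1..c}))"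
    proof
      fix x assume "x \<in> snow_diagram D"
      moreover obtain r0 c where x: "x = (r0, c)" by (cases x)
      ultimately have
        h: "(r0, c) \<in> D \<or> (\<exists>r. (r, c) \<in> snow_dark D \<and> 1 \<le> r0 \<and> r0 < r)"
        unfolding snow_diagram_def by auto
      show "x \<in> (\<Union>(r, c)\<in>snow_dark D. ({1..r} \<times> {c}) \<union> ({r} \<times> {1..c}))"
      proof (cases "(r0, c) \<in> D")
        case True
        from cover[OF True] obtain y where rc0: "y \<in> snow_dark D"
          and o0: "(fst y = r0 \<and> c \<le> snd y) \<or> (snd y = c \<and> r0 \<le> fst y)" by blast
        obtain r1 c1 where yy: "y = (r1, c1)" by (cases y)
        have rc: "(r1, c1) \<in> snow_dark D" using rc0 yy by simp
        have o: "(r1 = r0 \<and> c \<le> c1) \<or> (c1 = c \<and> r0 \<le> r1)" using o0 yy by simp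
        have "1 \<le> r0" "1 \<le> c" using True c1 unfolding D_def diagram_def by auto
        then have "x \<in> ({1..r1} \<times> {c1}) \<union> ({r1} \<times> {1..c1})" using o x by auto
        then show ?thesis using rc by blast
      next
        case False
        then obtain r where "(r, c) \<in> snow_dark D" "1 \<le> r0" "r0 < r" using h by auto
        moreover have "x \<in> ({1..r} \<times> {c}) \<union> ({r} \<times> {1..c})" using calculation x by auto
        ultimately show ?thesis by blast
      qed
    qed
  next
    show "(\<Union>(r, c)\<in>snow_dark D. ({1..r} \<times> {c}) \<union> ({r} \<times> {1..c})) \<subseteq> snow_diagram D"
    proof
      fix x assume "x \<in> (\<Union>(r, c)\<in>snow_dark D. ({1..r} \<times> {c}) \<union> ({r} \<times> {1..c}))"
      then obtain r c where rc: "(r, c) \<in> snow_dark D"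
        and xin: "x \<in> ({1..r} \<times> {c}) \<union> ({r} \<times> {1..c})" by blast
      obtain a b where xab: "x = (a, b)" by (cases x)
      have ab: "(a, b) \<in> ({1..r} \<times> {c}) \<union> ({r} \<times> {1..c})" using xin xab by simp
      have rcD: "(r, c) \<in> D" using rc dsub by auto
      show "x \<in> snow_diagram D"
      proof (cases "a = r")
        case True
        then have "b \<le> c" "1 \<le> b" using ab c1[OF rcD] by auto
        then have "(a, b) \<in> D" using left[OF rcD] True by auto
        then show ?thesis unfolding snow_diagram_def xab by blast
      next
        case False
        then have "b = c" "1 \<le> a" "a < r" using ab by auto
        then show ?thesis using rc unfolding snow_diagram_def xab by blast
      qed
    qed
  qed
qed

end
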